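(* Let $n\ge 2$, let $\gamma$ be an admissible Jordan arc, and let $f:\gamma\to\mathbb{C}$ be such that $f^{(n+1)}$ exists and is continuous on $\gamma$. Then for every $k=1,2,\dots,n-1$ and all $z_1\ne z_2$ in $\gamma$, \[ |d_1^{\,k}(f\,|\,z_1,z_2)|\le\frac{C_{\gamma,k}}{k+1}, \] where \[ C_{\gamma,k}=\sup_{z\in\gamma}|f^{(k+1)}(z)|+\sup_{z_1,z_2\in\gamma,\ z_1\ne z_2}\left|\frac{\int_{z_2}^{z_1}(z-z_2)^{k+1}f^{(k+2)}(z)\,dz}{(z_1-z_2)^{k+1}}\right| \] is finite and depends only on $f,\gamma,k$.
   Context: A Jordan arc is the image of $[0,1]$ under a homeomorphism into $\mathbb{C}$; it is admissible if it is the image of a parametrization $\phi\in C^1([0,1])$ with $\phi'(t)\ne0$ for all $t\in[0,1]$ (one-sided at endpoints). For $g$ on $\gamma$, $g'(z_1)=\lim_{z\to z_1,\,z\in\gamma}\frac{g(z)-g(z_1)}{z-z_1}$; higher derivatives $g^{(k)}$ are defined inductively. For $z_1=\phi(t_1),z_2=\phi(t_2)$, $\int_{z_2}^{z_1}g(z)\,dz:=\int_{t_2}^{t_1}g(\phi(t))\phi'(t)\,dt$. $d_1(f\,|\,z_1,z_2)=\frac{f(z_1)-f(z_2)}{z_1-z_2}$ and $d_1^{\,k}(f\,|\,z_1,z_2)$ is its $k$-th derivative along $\gamma$ with respect to $z_1$. *)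

theory Defs
  imports "HOL-Analysis.Analysis"
begin

text \<open>Admissible parametrization: phi is C^1 on [0,1] (one-sided derivatives at the
endpoints), with nonvanishing derivative, and injective on [0,1] (a continuous injection
of the compact interval is a homeomorphism onto its image, i.e. a Jordan arc).\<close>
definition admissible_param :: "(real \<Rightarrow> complex) \<Rightarrow> bool" where
  "admissible_param \<phi> \<longleftrightarrow> inj_on \<phi> {0..1} \<and>
     (\<exists>\<phi>'. continuous_on {0..1} \<phi>' \<and>
        (\<forall>t\<in>{0..1}. (\<phi> has_vector_derivative \<phi>' t) (at t within {0..1}) \<and> \<phi>' t \<noteq> 0))"

fun arc_deriv :: "complex set \<Rightarrow> nat \<Rightarrow> (complex \<Rightarrow> complex) \<Rightarrow> complex \<Rightarrow> complex" where
  "arc_deriv S 0 g = g"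
| "arc_deriv S (Suc k) g =
     (\<lambda>z. Lim (at z within S) (\<lambda>w. (arc_deriv S k g w - arc_deriv S k g z) / (w - z)))"

definition arc_deriv_exists_upto :: "complex set \<Rightarrow> nat \<Rightarrow> (complex \<Rightarrow> complex) \<Rightarrow> bool" where
  "arc_deriv_exists_upto S m g \<longleftrightarrow>
     (\<forall>k<m. \<forall>z\<in>S. \<exists>D. ((\<lambda>w. (arc_deriv S k g w - arc_deriv S k g z) / (w - z)) \<longlongrightarrow> D)
                            (at z within S))"

definition oriented_integral :: "real \<Rightarrow> real \<Rightarrow> (real \<Rightarrow> complex) \<Rightarrow> complex" where
  "oriented_integral a b h = (if a \<le> b then integral {a..b} h else - integral {b..a} h)"

definition arc_param :: "(real \<Rightarrow> complex) \<Rightarrow> complex \<Rightarrow> real" where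
  "arc_param \<phi> z = (THE t. t \<in> {0..1} \<and> \<phi> t = z)"

text \<open>int_{z2}^{z1} g(z) dz := int_{t2}^{t1} g(phi t) phi'(t) dt.\<close>
definition arc_integral :: "(real \<Rightarrow> complex) \<Rightarrow> (complex \<Rightarrow> complex) \<Rightarrow> complex \<Rightarrow> complex \<Rightarrow> complex" where
  "arc_integral \<phi> g z2 z1 =
     oriented_integral (arc_param \<phi> z2) (arc_param \<phi> z1)
       (\<lambda>t. g (\<phi> t) * vector_derivative \<phi> (at t within {0..1}))"

text \<open>d_1(f | z1, z2) as a function of z1.\<close>
definition d1 :: "(complex \<Rightarrow> complex) \<Rightarrow> complex \<Rightarrow> complex \<Rightarrow> complex" where
  "d1 f z2 z1 = (f z1 - f z2) / (z1 - z2)"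

definition d1k :: "complex set \<Rightarrow> nat \<Rightarrow> (complex \<Rightarrow> complex) \<Rightarrow> complex \<Rightarrow> complex \<Rightarrow> complex" where
  "d1k S k f z1 z2 = arc_deriv S k (d1 f z2) z1"

end

theory Submission
  imports Defs
begin


lemma adm_D:
  assumes "admissible_param \<phi>"
  obtains \<phi>' where "inj_on \<phi> {0..1}" "continuous_on {0..1} \<phi>'"
    "\<And>t. t\<in>{0..1} \<Longrightarrow> (\<phi> has_vector_derivative \<phi>' t) (at t within {0..1})"
    "\<And>t. t\<in>{0..1} \<Longrightarrow> \<phi>' t \<noteq> 0"
  using assms unfolding admissible_param_def by blast

lemma adm_cont:
  assumes "admissible_param \<phi>"
  shows "continuous_on {0..1} \<phi>"
proof -
  obtain \<phi>' where d: "\<And>t. t\<in>{0..1} \<Longrightarrow> (\<phi> has_vector_derivative \<phi>' t) (at t within {0..1})"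
    using adm_D[OF assms] by metis
  show ?thesis unfolding continuous_on_eq_continuous_within
    using d has_vector_derivative_continuous by blast
qed

lemma adm_nontriv:
  assumes "admissible_param \<phi>" "z \<in> \<phi> ` {0..1}"
  shows "at z within \<phi> ` {0..1} \<noteq> bot"
proof
  assume bot: "at z within \<phi> ` {0..1} = bot"
  obtain t where t: "t \<in> {0..1}" "z = \<phi> t" using assms(2) by blast
  have inj: "inj_on \<phi> {0..1}" using adm_D[OF assms(1)] by metis
  have "filterlim \<phi> (at z within \<phi> ` {0..1}) (at t within {0..1})"
  proof (rule filterlim_at_withinI)
    show "filterlim \<phi> (nhds z) (at t within {0..1})"
      using adm_cont[OF assms(1)] t by (metis continuous_on_def)
    show "\<forall>\<^sub>F x in at t within {0..1}. \<phi> x \<in> \<phi> ` {0..1} - {z}"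
    proof -
      have "\<forall>x. x \<noteq> t \<longrightarrow> x \<in> {0..1} \<longrightarrow> \<phi> x \<in> \<phi> ` {0..1} - {z}"
        using inj t by (auto simp: inj_on_def)
      then show ?thesis unfolding eventually_at_filter by (intro always_eventually) blast
    qed
  qed
  then have "at t within {0..1::real} = bot" using bot by (simp add: filterlim_def bot_unique filtermap_bot_iff)
  moreover have "t islimpt {0..1::real}" using t by simp
  ultimately show False by (simp add: trivial_limit_within)
qed

lemma adm_vd:
  assumes "admissible_param \<phi>" "t \<in> {0..1}"
    "\<And>t. t\<in>{0..1} \<Longrightarrow> (\<phi> has_vector_derivative \<phi>' t) (at t within {0..1})"
  shows "vector_derivative \<phi> (at t within {0..1}) = \<phi>' t"
  using vector_derivative_within_cbox[of 0 1 t \<phi> "\<phi>' t"] assms by auto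

lemma adm_lip:
  assumes "admissible_param \<phi>"
  obtains L where "L > 0" "\<forall>t\<in>{0..1}. norm (vector_derivative \<phi> (at t within {0..1})) \<le> L"
     "\<forall>s\<in>{0..1}. \<forall>t\<in>{0..1}. norm (\<phi> s - \<phi> t) \<le> L * \<bar>s - t\<bar>"
proof -
  obtain \<phi>' where c: "continuous_on {0..1} \<phi>'"
    and d: "\<And>t. t\<in>{0..1} \<Longrightarrow> (\<phi> has_vector_derivative \<phi>' t) (at t within {0..1})"
    using adm_D[OF assms] by metis
  have "bounded (\<phi>' ` {0..1})"
    by (intro compact_imp_bounded compact_continuous_image c) auto
  then obtain B where B: "B > 0" "\<And>x. x \<in> \<phi>' ` {0..1} \<Longrightarrow> norm x \<le> B"
    unfolding bounded_pos by blast
  have vd: "\<forall>t\<in>{0..1}. norm (vector_derivative \<phi> (at t within {0..1})) \<le> B"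
    using adm_vd[OF assms _ d] B by auto
  have "\<forall>s\<in>{0..1}. \<forall>t\<in>{0..1}. norm (\<phi> s - \<phi> t) \<le> B * norm (s - t)"
  proof (intro ballI)
    fix s t :: real assume st: "s \<in> {0..1}" "t \<in> {0..1}"
    show "norm (\<phi> s - \<phi> t) \<le> B * norm (s - t)"
    proof (rule differentiable_bound[where f' = "\<lambda>x h. h *\<^sub>R \<phi>' x"])
      show "convex {0..1::real}" by simp
      show "(\<phi> has_derivative (\<lambda>h. h *\<^sub>R \<phi>' x)) (at x within {0..1})" if "x \<in> {0..1}" for x
        using d[OF that] by (simp add: has_vector_derivative_def)
      show "onorm (\<lambda>h. h *\<^sub>R \<phi>' x) \<le> B" if "x \<in> {0..1}" for x
      proof (rule onorm_bound)
        have "norm (\<phi>' x) \<le> B" using B that by auto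
        then show "norm (h *\<^sub>R \<phi>' x) \<le> B * norm h" for h
          by (metis abs_ge_zero mult.commute mult_right_mono norm_scaleR real_norm_def)
      qed (use B in auto)
    qed (use st in auto)
  qed
  then show ?thesis using that B vd by auto
qed

lemma adm_chord:
  assumes "admissible_param \<phi>"
  obtains c where "c > 0" "\<forall>s\<in>{0..1}. \<forall>t\<in>{0..1}. c * \<bar>s - t\<bar> \<le> norm (\<phi> s - \<phi> t)"
proof -
  obtain \<phi>' where inj: "inj_on \<phi> {0..1}" and c: "continuous_on {0..1} \<phi>'"
    and d: "\<And>t. t\<in>{0..1} \<Longrightarrow> (\<phi> has_vector_derivative \<phi>' t) (at t within {0..1})"
    and nz: "\<And>t. t\<in>{0..1} \<Longrightarrow> \<phi>' t \<noteq> 0"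
    using adm_D[OF assms] by metis
  have "continuous_on {0..1} (\<lambda>t. norm (\<phi>' t))" using c by (intro continuous_intros)
  from continuous_attains_inf[OF compact_Icc _ this]
  obtain t0 where t0: "t0 \<in> {0..1}" "\<And>t. t \<in> {0..1} \<Longrightarrow> norm (\<phi>' t0) \<le> norm (\<phi>' t)"
    by auto
  define m where "m = norm (\<phi>' t0)"
  have m: "m > 0" using nz[OF t0(1)] by (simp add: m_def)
  have "uniformly_continuous_on {0..1} \<phi>'"
    by (rule compact_uniformly_continuous[OF c]) simp
  then obtain \<delta> where \<delta>: "\<delta> > 0"
    "\<And>x x'. x \<in> {0..1} \<Longrightarrow> x' \<in> {0..1} \<Longrightarrow> dist x' x < \<delta> \<Longrightarrow> dist (\<phi>' x') (\<phi>' x) < m/2"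
    unfolding uniformly_continuous_on_def using m by (meson half_gt_zero)
  have near: "m/2 * \<bar>s - t\<bar> \<le> norm (\<phi> s - \<phi> t)"
    if st: "s \<in> {0..1}" "t \<in> {0..1}" "\<bar>s - t\<bar> < \<delta>" for s t
  proof -
    define S where "S = {min s t .. max s t}"
    have SS: "S \<subseteq> {0..1}" using st by (auto simp: S_def)
    have "norm (\<phi> s - \<phi> t - (\<lambda>h. h *\<^sub>R \<phi>' t) (s - t)) \<le> norm (s - t) * (m/2)"
    proof (rule differentiable_bound_linearization[where S = S and f' = "\<lambda>x h. h *\<^sub>R \<phi>' x"])
      show "t + u *\<^sub>R (s - t) \<in> S" if "u \<in> {0..1}" for u
      proof -
        have a: "u * \<bar>s-t\<bar> \<le> \<bar>s-t\<bar>" "0 \<le> u * \<bar>s-t\<bar>" using that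
          by (auto intro: mult_left_le_one_le)
        show ?thesis
        proof (cases "s \<le> t")
          case True
          then have "u * \<bar>s-t\<bar> = u * t - u * s" by (simp add: algebra_simps)
          then show ?thesis using a True by (simp add: S_def algebra_simps)
        next
          case False
          then have "u * \<bar>s-t\<bar> = u * s - u * t" by (simp add: algebra_simps)
          then show ?thesis using a False by (simp add: S_def algebra_simps)
        qed
      qed
      show "(\<phi> has_derivative (\<lambda>h. h *\<^sub>R \<phi>' x)) (at x within S)" if "x \<in> S" for x
      proof -
        have "x \<in> {0..1}" using that SS by blast
        then show ?thesis using d[of x] SS
          by (auto simp: has_vector_derivative_def intro: has_derivative_subset)
      qed
      show "onorm ((\<lambda>h. h *\<^sub>R \<phi>' x) - (\<lambda>h. h *\<^sub>R \<phi>' t)) \<le> m/2" if "x \<in> S" for x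
      proof (rule onorm_bound)
        have xS: "min s t \<le> x" "x \<le> max s t" using that by (auto simp: S_def)
        have "\<bar>x - t\<bar> \<le> \<bar>s - t\<bar>" using xS by (auto simp: min_def max_def split: if_splits)
        then have "\<bar>x - t\<bar> < \<delta>" using st(3) by linarith
        moreover have "x \<in> {0..1}" using that SS by blast
        ultimately have "dist (\<phi>' x) (\<phi>' t) < m/2"
          using \<delta>(2)[of t x] st by (auto simp: dist_real_def)
        then have le: "norm (\<phi>' x - \<phi>' t) \<le> m/2" by (simp add: dist_norm)
        show "norm (((\<lambda>h. h *\<^sub>R \<phi>' x) - (\<lambda>h. h *\<^sub>R \<phi>' t)) h) \<le> m/2 * norm h" for h
        proof -
          have "norm (((\<lambda>h. h *\<^sub>R \<phi>' x) - (\<lambda>h. h *\<^sub>R \<phi>' t)) h) = \<bar>h\<bar> * norm (\<phi>' x - \<phi>' t)"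
            by (simp add: fun_diff_def flip: scaleR_diff_right)
          also have "\<dots> \<le> \<bar>h\<bar> * (m/2)" by (rule mult_left_mono[OF le]) simp
          finally show ?thesis by (simp add: mult.commute)
        qed
      qed (use m in auto)
      show "t \<in> S" by (simp add: S_def)
    qed
    then have 1: "norm (\<phi> s - \<phi> t - (s - t) *\<^sub>R \<phi>' t) \<le> \<bar>s - t\<bar> * (m/2)" by simp
    have 2: "\<bar>s - t\<bar> * m \<le> norm ((s - t) *\<^sub>R \<phi>' t)"
      using t0(2)[OF st(2)] by (simp add: m_def mult_left_mono)
    have "norm ((s - t) *\<^sub>R \<phi>' t) \<le> norm (\<phi> s - \<phi> t) + norm (\<phi> s - \<phi> t - (s - t) *\<^sub>R \<phi>' t)"
      using norm_triangle_sub[of "(s - t) *\<^sub>R \<phi>' t" "\<phi> s - \<phi> t"] by (simp add: norm_minus_commute)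
    with 1 2 show ?thesis by (simp add: algebra_simps)
  qed
  define K where "K = ({0..1} \<times> {0..1::real}) \<inter> {p. \<delta> \<le> \<bar>fst p - snd p\<bar>}"
  show ?thesis
  proof (cases "K = {}")
    case True
    show ?thesis
    proof (rule that[of "m/2"])
      show "\<forall>s\<in>{0..1}. \<forall>t\<in>{0..1}. m / 2 * \<bar>s - t\<bar> \<le> norm (\<phi> s - \<phi> t)"
      proof (intro ballI)
        fix s t :: real assume st: "s \<in> {0..1}" "t \<in> {0..1}"
        then have "(s, t) \<notin> K" using True by blast
        then have "\<bar>s - t\<bar> < \<delta>" using st by (auto simp: K_def)
        then show "m / 2 * \<bar>s - t\<bar> \<le> norm (\<phi> s - \<phi> t)" using near st by blast
      qed
    qed (use m in auto)
  next
    case False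
    have "compact K" unfolding K_def
      by (intro compact_Int_closed compact_Times closed_Collect_le continuous_intros) auto
    moreover have "continuous_on K (\<lambda>p. norm (\<phi> (fst p) - \<phi> (snd p)))"
      using adm_cont[OF assms] unfolding K_def
      by (auto intro!: continuous_intros continuous_on_compose2[of "{0..1}" \<phi>])
    ultimately obtain p0 where p0: "p0 \<in> K" "\<And>p. p \<in> K \<Longrightarrow> norm (\<phi> (fst p0) - \<phi> (snd p0)) \<le> norm (\<phi> (fst p) - \<phi> (snd p))"
      using continuous_attains_inf[of K] False by blast
    define c2 where "c2 = norm (\<phi> (fst p0) - \<phi> (snd p0))"
    have "fst p0 \<noteq> snd p0" using p0(1) \<delta>(1) by (auto simp: K_def)
    moreover have "fst p0 \<in> {0..1}" "snd p0 \<in> {0..1}" using p0(1) unfolding K_def by (auto simp: mem_Times_iff)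
    ultimately have "\<phi> (fst p0) \<noteq> \<phi> (snd p0)" using inj by (meson inj_onD)
    then have c2: "c2 > 0" by (simp add: c2_def)
    show ?thesis
    proof (rule that[of "min (m/2) c2"])
      show "min (m/2) c2 > 0" using m c2 by simp
      show "\<forall>s\<in>{0..1}. \<forall>t\<in>{0..1}. min (m/2) c2 * \<bar>s - t\<bar> \<le> norm (\<phi> s - \<phi> t)"
      proof (intro ballI)
        fix s t :: real assume st: "s \<in> {0..1}" "t \<in> {0..1}"
        show "min (m/2) c2 * \<bar>s - t\<bar> \<le> norm (\<phi> s - \<phi> t)"
        proof (cases "\<bar>s - t\<bar> < \<delta>")
          case True
          have "min (m/2) c2 * \<bar>s - t\<bar> \<le> m/2 * \<bar>s - t\<bar>" by (intro mult_right_mono) auto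
          with near[OF st True] show ?thesis by linarith
        next
          case False
          then have "(s, t) \<in> K" using st by (auto simp: K_def)
          from p0(2)[OF this] have "c2 \<le> norm (\<phi> s - \<phi> t)" by (simp add: c2_def)
          moreover have "min (m/2) c2 * \<bar>s - t\<bar> \<le> c2 * 1"
            using st c2 by (intro mult_mono) (auto simp: abs_le_iff)
          ultimately show ?thesis by linarith
        qed
      qed
    qed
  qed
qed




declare arc_deriv.simps(2)[simp del]

lemma lim_deriv:
  assumes "at z within S \<noteq> bot" "(h has_field_derivative D) (at z within S)"
  shows "Lim (at z within S) (\<lambda>w. (h w - h z) / (w - z)) = D"
  using assms by (simp add: has_field_derivative_iff tendsto_Lim)

lemma aux_val:
  fixes a b c N u :: complex
  assumes "u \<noteq> 0" "b = c / u"
  shows "((a - N * b) * u - c * (1 - 0)) / (u * u) = (a - (N + 1) * b) / u"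
  using assms by (simp add: field_simps)

locale arcset =
  fixes \<phi> :: "real \<Rightarrow> complex" and f :: "complex \<Rightarrow> complex" and n :: nat
  assumes adm: "admissible_param \<phi>"
    and ex: "arc_deriv_exists_upto (\<phi> ` {0..1}) (n + 1) f"
    and cont: "continuous_on (\<phi> ` {0..1}) (arc_deriv (\<phi> ` {0..1}) (n + 1) f)"
begin

abbreviation "\<Gamma> \<equiv> \<phi> ` {0..1}"
abbreviation "F j \<equiv> arc_deriv \<Gamma> j f"

lemma nontriv: "z \<in> \<Gamma> \<Longrightarrow> at z within \<Gamma> \<noteq> bot"
  using adm_nontriv[OF adm] by blast

lemma fderiv:
  assumes "j \<le> n" "z \<in> \<Gamma>"
  shows "(F j has_field_derivative F (Suc j) z) (at z within \<Gamma>)"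
proof -
  have "j < n + 1" using assms by simp
  then have "\<exists>D. ((\<lambda>w. (F j w - F j z)/(w - z)) \<longlongrightarrow> D) (at z within \<Gamma>)"
    using ex assms(2) unfolding arc_deriv_exists_upto_def by blast
  then obtain D where D: "((\<lambda>w. (F j w - F j z)/(w - z)) \<longlongrightarrow> D) (at z within \<Gamma>)" by blast
  have "F (Suc j) z = D" using tendsto_Lim[OF nontriv[OF assms(2)] D] by (simp add: arc_deriv.simps(2))
  with D show ?thesis by (simp add: has_field_derivative_iff)
qed

lemma fcont:
  assumes "j \<le> n + 1"
  shows "continuous_on \<Gamma> (F j)"
proof (cases "j = n + 1")
  case True then show ?thesis using cont by simp
next
  case False
  then have "j \<le> n" using assms by simp
  then show ?thesis unfolding continuous_on_eq_continuous_within
    using fderiv has_field_derivative_imp_has_derivative has_derivative_continuous by blast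
qed

lemma compact_\<Gamma>: "compact \<Gamma>"
  by (intro compact_continuous_image adm_cont[OF adm]) simp

lemma fbound:
  assumes "j \<le> n + 1"
  obtains M where "M > 0" "\<And>z. z \<in> \<Gamma> \<Longrightarrow> norm (F j z) \<le> M"
proof -
  have "bounded (F j ` \<Gamma>)"
    by (intro compact_imp_bounded compact_continuous_image fcont assms compact_\<Gamma>)
  then show ?thesis using that unfolding bounded_pos by blast
qed

definition "G z2 j = arc_deriv \<Gamma> j (d1 f z2)"

lemma grec:
  assumes "z2 \<in> \<Gamma>"
  shows "j \<le> n \<Longrightarrow> \<forall>z\<in>\<Gamma>-{z2}. (G z2 j has_field_derivative
            (F (Suc j) z - of_nat (Suc j) * G z2 j z) / (z - z2)) (at z within \<Gamma>)"
proof (induction j)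
  case 0
  show ?case
  proof
    fix z assume z: "z \<in> \<Gamma> - {z2}"
    have "((\<lambda>w. (f w - f z2) / (w - z2)) has_field_derivative
            (F 1 z * (z - z2) - (f z - f z2) * 1) / ((z - z2) * (z - z2))) (at z within \<Gamma>)"
      using fderiv[of 0 z] z by (auto intro!: derivative_eq_intros)
    moreover have "(F 1 z * (z - z2) - (f z - f z2) * 1) / ((z - z2) * (z - z2))
        = (F (Suc 0) z - of_nat (Suc 0) * G z2 0 z) / (z - z2)"
      using z by (simp add: G_def d1_def field_simps)
    moreover have "G z2 0 = (\<lambda>w. (f w - f z2) / (w - z2))" by (simp add: G_def d1_def fun_eq_iff)
    ultimately show "(G z2 0 has_field_derivative
            (F (Suc 0) z - of_nat (Suc 0) * G z2 0 z) / (z - z2)) (at z within \<Gamma>)"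
      by simp
  qed
next
  case (Suc j)
  then have IH: "\<forall>z\<in>\<Gamma>-{z2}. (G z2 j has_field_derivative
            (F (Suc j) z - of_nat (Suc j) * G z2 j z) / (z - z2)) (at z within \<Gamma>)" by simp
  have eq: "G z2 (Suc j) w = (F (Suc j) w - of_nat (Suc j) * G z2 j w) / (w - z2)"
    if w: "w \<in> \<Gamma> - {z2}" for w
  proof -
    have "G z2 (Suc j) w = Lim (at w within \<Gamma>) (\<lambda>v. (G z2 j v - G z2 j w) / (v - w))"
      by (simp add: G_def arc_deriv.simps(2))
    also have "\<dots> = (F (Suc j) w - of_nat (Suc j) * G z2 j w) / (w - z2)"
      using lim_deriv[OF nontriv IH[rule_format, OF w]] w by simp
    finally show ?thesis .
  qed
  show ?case
  proof
    fix z assume z: "z \<in> \<Gamma> - {z2}"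
    have dG: "(G z2 j has_field_derivative G z2 (Suc j) z) (at z within \<Gamma>)"
      using IH z eq[OF z] by simp
    have dF: "(F (Suc j) has_field_derivative F (Suc (Suc j)) z) (at z within \<Gamma>)"
      using fderiv[of "Suc j" z] Suc.prems z by simp
    have d: "((\<lambda>w. (F (Suc j) w - of_nat (Suc j) * G z2 j w) / (w - z2)) has_field_derivative
       ((F (Suc (Suc j)) z - of_nat (Suc j) * G z2 (Suc j) z) * (z - z2)
         - (F (Suc j) z - of_nat (Suc j) * G z2 j z) * (1 - 0)) / ((z - z2) * (z - z2))) (at z within \<Gamma>)"
      by (intro DERIV_divide DERIV_diff DERIV_cmult dF dG DERIV_ident DERIV_const) (use z in auto)
    have val: "((F (Suc (Suc j)) z - of_nat (Suc j) * G z2 (Suc j) z) * (z - z2)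
         - (F (Suc j) z - of_nat (Suc j) * G z2 j z) * (1 - 0)) / ((z - z2) * (z - z2))
       = (F (Suc (Suc j)) z - of_nat (Suc (Suc j)) * G z2 (Suc j) z) / (z - z2)"
      using aux_val[of "z - z2" "G z2 (Suc j) z" "F (Suc j) z - of_nat (Suc j) * G z2 j z"
          "F (Suc (Suc j)) z" "of_nat (Suc j)"] z eq[OF z] by (simp add: add.commute)
    show "(G z2 (Suc j) has_field_derivative
            (F (Suc (Suc j)) z - of_nat (Suc (Suc j)) * G z2 (Suc j) z) / (z - z2)) (at z within \<Gamma>)"
    proof (rule has_field_derivative_transform_within[where d = "dist z z2"])
      show "((\<lambda>w. (F (Suc j) w - of_nat (Suc j) * G z2 j w) / (w - z2)) has_field_derivative
            (F (Suc (Suc j)) z - of_nat (Suc (Suc j)) * G z2 (Suc j) z) / (z - z2)) (at z within \<Gamma>)"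
        using d val by simp
      show "0 < dist z z2" using z by simp
      show "z \<in> \<Gamma>" using z by simp
      show "(F (Suc j) x - of_nat (Suc j) * G z2 j x) / (x - z2) = G z2 (Suc j) x"
        if "x \<in> \<Gamma>" "dist x z < dist z z2" for x
      proof -
        have "x \<noteq> z2" using that by (auto simp: dist_commute)
        then show ?thesis using eq[of x] that by simp
      qed
    qed
  qed
qed

end



lemma aux_t:
  fixes A B P w N fm :: complex
  assumes "fm \<noteq> 0" "N \<noteq> 0"
  shows "A * P / fm + (B * (P * w) + N * ((0 - 1) * P) * A) / (N * fm) = B * (P * w) / (N * fm)"
  using assms by (simp add: field_simps)

lemma taylor_gen:
  fixes FF :: "nat \<Rightarrow> complex \<Rightarrow> complex"
  assumes "\<forall>i\<le>m. (FF i has_field_derivative FF (Suc i) z) (at z within S)"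
  shows "((\<lambda>w. \<Sum>i\<le>m. FF i w * (z2 - w)^i / fact i) has_field_derivative
            FF (Suc m) z * (z2 - z)^m / fact m) (at z within S)"
  using assms
proof (induction m)
  case 0
  then show ?case by simp
next
  case (Suc m)
  have IH: "((\<lambda>w. \<Sum>i\<le>m. FF i w * (z2 - w)^i / fact i) has_field_derivative
            FF (Suc m) z * (z2 - z)^m / fact m) (at z within S)" using Suc by simp
  have dF: "(FF (Suc m) has_field_derivative FF (Suc (Suc m)) z) (at z within S)" using Suc.prems by simp
  have dt: "((\<lambda>w. FF (Suc m) w * (z2 - w)^(Suc m) / fact (Suc m)) has_field_derivative
     (FF (Suc (Suc m)) z * (z2 - z)^(Suc m) + of_nat (Suc m) * ((0 - 1) * (z2 - z)^(Suc m - Suc 0)) * FF (Suc m) z)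
       / fact (Suc m)) (at z within S)"
    by (rule DERIV_cdivide, rule DERIV_mult[OF dF DERIV_power[OF DERIV_diff[OF DERIV_const DERIV_ident]]])
  have "((\<lambda>w. (\<Sum>i\<le>m. FF i w * (z2 - w)^i / fact i) + FF (Suc m) w * (z2 - w)^(Suc m) / fact (Suc m))
     has_field_derivative FF (Suc m) z * (z2 - z)^m / fact m +
     (FF (Suc (Suc m)) z * (z2 - z)^(Suc m) + of_nat (Suc m) * ((0 - 1) * (z2 - z)^(Suc m - Suc 0)) * FF (Suc m) z)
       / fact (Suc m)) (at z within S)"
    by (rule DERIV_add[OF IH dt])
  moreover have "FF (Suc m) z * (z2 - z)^m / fact m +
     (FF (Suc (Suc m)) z * (z2 - z)^(Suc m) + of_nat (Suc m) * ((0 - 1) * (z2 - z)^(Suc m - Suc 0)) * FF (Suc m) z)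
       / fact (Suc m) = FF (Suc (Suc m)) z * (z2 - z)^(Suc m) / fact (Suc m)"
  proof -
    have f: "(fact (Suc m) :: complex) = of_nat (Suc m) * fact m" by (simp add: fact_Suc)
    have nz: "(fact m :: complex) \<noteq> 0" "(of_nat (Suc m) :: complex) \<noteq> 0" by (simp, rule of_nat_neq_0)
    show ?thesis unfolding f power_Suc2[of "z2 - z" m] using aux_t[OF nz, of "FF (Suc m) z" "(z2 - z)^m"
      "FF (Suc (Suc m)) z" "z2 - z"] by simp
  qed
  ultimately show ?case by simp
qed

context arcset begin

lemma gSuc:
  assumes "z1 \<in> \<Gamma>" "z2 \<in> \<Gamma>" "z1 \<noteq> z2" "j \<le> n"
  shows "G z2 (Suc j) z1 = (F (Suc j) z1 - of_nat (Suc j) * G z2 j z1) / (z1 - z2)"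
proof -
  have "G z2 (Suc j) z1 = Lim (at z1 within \<Gamma>) (\<lambda>v. (G z2 j v - G z2 j z1) / (v - z1))"
    by (simp add: G_def arc_deriv.simps(2))
  also have "\<dots> = (F (Suc j) z1 - of_nat (Suc j) * G z2 j z1) / (z1 - z2)"
    using lim_deriv[OF nontriv grec[OF assms(2,4), rule_format]] assms by simp
  finally show ?thesis .
qed

lemma aux_closed0:
  fixes u Fv Gj s p N fj :: complex
  assumes "u \<noteq> 0" "N \<noteq> 0" "fj \<noteq> 0"
  shows "(-s) * (p * u) * ((Fv - N * Gj) / u) / (N * fj) = s * p * Gj / fj + Fv * ((-s) * p) / (N * fj)"
  using assms by (simp add: field_simps)

lemma aux_closed:
  fixes u Fv Gj Gs :: complex
  assumes "u \<noteq> 0" "Gs = (Fv - of_nat (Suc j) * Gj) / u"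
  shows "(-1)^(Suc j) * u^(Suc (Suc j)) * Gs / fact (Suc j)
     = (-1)^j * u^(Suc j) * Gj / fact j + Fv * (-u)^(Suc j) / fact (Suc j)"
proof -
  have f: "(fact (Suc j) :: complex) = of_nat (Suc j) * fact j" by (simp add: fact_Suc)
  have nz: "(fact j :: complex) \<noteq> 0" "(of_nat (Suc j) :: complex) \<noteq> 0" by (simp, rule of_nat_neq_0)
  have q: "(-1::complex)^(Suc j) = - ((-1)^j)" by (simp only: power_Suc) simp
  have p: "(-u)^(Suc j) = (- ((-1)^j)) * u^(Suc j)" by (subst power_minus) (simp only: q)
  have r: "u^(Suc (Suc j)) = u^(Suc j) * u" by (rule power_Suc2)
  show ?thesis unfolding f p q r assms(2)
    by (rule aux_closed0[OF assms(1) nz(2,1), of "(-1)^j" "u^(Suc j)" Fv Gj])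
qed

lemma gclosed:
  assumes "z1 \<in> \<Gamma>" "z2 \<in> \<Gamma>" "z1 \<noteq> z2"
  shows "j \<le> n \<Longrightarrow> (-1)^j * (z1 - z2)^(Suc j) * G z2 j z1 / fact j
          = (\<Sum>i\<le>j. F i z1 * (z2 - z1)^i / fact i) - f z2"
proof (induction j)
  case 0
  then show ?case using assms by (simp add: G_def d1_def)
next
  case (Suc j)
  have "(-1)^(Suc j) * (z1 - z2)^(Suc (Suc j)) * G z2 (Suc j) z1 / fact (Suc j)
     = (-1)^j * (z1 - z2)^(Suc j) * G z2 j z1 / fact j + F (Suc j) z1 * (-(z1 - z2))^(Suc j) / fact (Suc j)"
    by (rule aux_closed) (use assms gSuc[OF assms, of j] Suc.prems in auto)
  also have "\<dots> = (\<Sum>i\<le>Suc j. F i z1 * (z2 - z1)^i / fact i) - f z2"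
    using Suc by simp
  finally show ?case .
qed

end



lemma oriented_bound:
  fixes h :: "real \<Rightarrow> complex"
  assumes "continuous_on {min a b..max a b} h" "\<And>t. t \<in> {min a b..max a b} \<Longrightarrow> norm (h t) \<le> B"
  shows "norm (oriented_integral a b h) \<le> B * \<bar>b - a\<bar>"
proof (cases "a \<le> b")
  case True
  then show ?thesis using integral_bound[of a b h B] assms by (simp add: oriented_integral_def)
next
  case False
  then show ?thesis using integral_bound[of b a h B] assms by (simp add: oriented_integral_def)
qed

lemma ftc_oriented:
  fixes H h :: "real \<Rightarrow> complex"
  assumes "a \<in> {0..1}" "b \<in> {0..1}"
    "\<And>t. t \<in> {0..1} \<Longrightarrow> (H has_vector_derivative h t) (at t within {0..1})"
  shows "oriented_integral a b h = H b - H a"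
proof (cases "a \<le> b")
  case True
  have "(h has_integral (H b - H a)) {a..b}"
  proof (rule fundamental_theorem_of_calculus[OF True])
    fix x assume x: "x \<in> {a..b}"
    with assms have "x \<in> {0..1}" "{a..b} \<subseteq> {0..1}" by auto
    then show "(H has_vector_derivative h x) (at x within {a..b})"
      by (meson assms(3) has_vector_derivative_within_subset)
  qed
  then show ?thesis using True by (simp add: oriented_integral_def integral_unique)
next
  case False
  have "(h has_integral (H a - H b)) {b..a}"
  proof (rule fundamental_theorem_of_calculus)
    show "b \<le> a" using False by simp
    fix x assume x: "x \<in> {b..a}"
    with assms have "x \<in> {0..1}" "{b..a} \<subseteq> {0..1}" by auto
    then show "(H has_vector_derivative h x) (at x within {b..a})"
      by (meson assms(3) has_vector_derivative_within_subset)
  qed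
  then show ?thesis using False by (simp add: oriented_integral_def integral_unique)
qed

lemma arc_integral_cmult:
  "arc_integral \<phi> (\<lambda>z. c * g z) a b = c * arc_integral \<phi> g a b"
  by (simp add: arc_integral_def oriented_integral_def mult.assoc)

context arcset begin

abbreviation "v t \<equiv> vector_derivative \<phi> (at t within {0..1})"

lemma phi_vd: "t \<in> {0..1} \<Longrightarrow> (\<phi> has_vector_derivative v t) (at t within {0..1})"
proof -
  assume t: "t \<in> {0..1}"
  obtain \<phi>' where d: "\<And>t. t\<in>{0..1} \<Longrightarrow> (\<phi> has_vector_derivative \<phi>' t) (at t within {0..1})"
    using adm_D[OF adm] by metis
  show ?thesis using adm_vd[OF adm t d] d[OF t] by simp
qed

lemma v_cont: "continuous_on {0..1} v"
proof -
  obtain \<phi>' where c: "continuous_on {0..1} \<phi>'" and d: "\<And>t. t\<in>{0..1} \<Longrightarrow> (\<phi> has_vector_derivative \<phi>' t) (at t within {0..1})"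
    using adm_D[OF adm] by metis
  show ?thesis using continuous_on_eq[OF c] adm_vd[OF adm _ d] by metis
qed

lemma arc_param_eq: "t \<in> {0..1} \<Longrightarrow> arc_param \<phi> (\<phi> t) = t"
proof -
  assume t: "t \<in> {0..1}"
  have inj: "inj_on \<phi> {0..1}" using adm_D[OF adm] by metis
  show ?thesis unfolding arc_param_def
    by (rule the_equality) (use t inj in \<open>auto simp: inj_on_def\<close>)
qed

lemma arc_integral_eq:
  assumes "t1 \<in> {0..1}" "t2 \<in> {0..1}"
  shows "arc_integral \<phi> g (\<phi> t2) (\<phi> t1) = oriented_integral t2 t1 (\<lambda>t. g (\<phi> t) * v t)"
  using assms by (simp add: arc_integral_def arc_param_eq)

lemma taylor_arc:
  assumes "t1 \<in> {0..1}" "t2 \<in> {0..1}" "m \<le> n"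
  shows "arc_integral \<phi> (\<lambda>z. F (Suc m) z * (\<phi> t2 - z)^m / fact m) (\<phi> t2) (\<phi> t1)
     = (\<Sum>i\<le>m. F i (\<phi> t1) * (\<phi> t2 - \<phi> t1)^i / fact i) - f (\<phi> t2)"
proof -
  define z2 where "z2 = \<phi> t2"
  define P where "P w = (\<Sum>i\<le>m. F i w * (z2 - w)^i / fact i)" for w
  have dH: "((P \<circ> \<phi>) has_vector_derivative (v t * (F (Suc m) (\<phi> t) * (z2 - \<phi> t)^m / fact m)))
       (at t within {0..1})" if t: "t \<in> {0..1}" for t
  proof (rule field_vector_diff_chain_within[OF phi_vd[OF t]])
    have "\<forall>i\<le>m. (F i has_field_derivative F (Suc i) (\<phi> t)) (at (\<phi> t) within \<Gamma>)"
      using fderiv assms(3) t by auto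
    from taylor_gen[OF this, of z2]
    show "(P has_field_derivative F (Suc m) (\<phi> t) * (z2 - \<phi> t) ^ m / fact m) (at (\<phi> t) within \<Gamma>)"
      unfolding P_def by simp
  qed
  have "arc_integral \<phi> (\<lambda>z. F (Suc m) z * (\<phi> t2 - z)^m / fact m) (\<phi> t2) (\<phi> t1)
      = oriented_integral t2 t1 (\<lambda>t. v t * (F (Suc m) (\<phi> t) * (z2 - \<phi> t)^m / fact m))"
    using arc_integral_eq[OF assms(1,2)] by (simp add: z2_def mult.commute)
  also have "\<dots> = (P \<circ> \<phi>) t1 - (P \<circ> \<phi>) t2"
    by (rule ftc_oriented[OF assms(2,1) dH])
  also have "(P \<circ> \<phi>) t2 = f z2"
  proof -
    have "(\<Sum>i\<le>m. F i z2 * (z2 - z2)^i / fact i) = (\<Sum>i\<in>{0}. F i z2 * (z2 - z2)^i / fact i)"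
      by (rule sum.mono_neutral_right) auto
    then show ?thesis by (simp add: P_def z2_def)
  qed
  finally show ?thesis by (simp add: P_def z2_def)
qed

end



lemma aux_main:
  fixes w U N fk Gv S f2 I Fv :: complex
  assumes "w \<noteq> 0" "U \<noteq> 0" "N \<noteq> 0" "fk \<noteq> 0"
    "w * U * Gv / fk = S - f2" "(- w) / (N * fk) * I = S + Fv * ((- w) * U) / (N * fk) - f2"
  shows "Gv = (Fv - I / U) / N"
proof -
  have "w * U * Gv / fk = (- w) / (N * fk) * I - Fv * ((- w) * U) / (N * fk)"
  proof -
    have g: "\<And>B S C f2 :: complex. B = S + C - f2 \<Longrightarrow> S - f2 = B - C" by (simp add: algebra_simps)
    show ?thesis unfolding assms(5) by (rule g[OF assms(6)])
  qed
  then have "w * (U * Gv * N) = w * (Fv * U - I)"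
    using assms(1-4) by (simp add: field_simps)
  then have "U * Gv * N = Fv * U - I" using assms(1) by simp
  then show ?thesis using assms(2,3) by (simp add: field_simps)
qed


context arcset begin

lemma main_eq:
  assumes t: "t1 \<in> {0..1}" "t2 \<in> {0..1}" and ne: "\<phi> t1 \<noteq> \<phi> t2" and k: "k + 1 \<le> n"
  shows "G (\<phi> t2) k (\<phi> t1) = (F (k+1) (\<phi> t1) - arc_integral \<phi> (\<lambda>z. (z - \<phi> t2)^(k+1) * F (k+2) z) (\<phi> t2) (\<phi> t1)
           / (\<phi> t1 - \<phi> t2)^(k+1)) / of_nat (k+1)"
proof -
  define z1 where "z1 = \<phi> t1"
  define z2 where "z2 = \<phi> t2"
  define I where "I = arc_integral \<phi> (\<lambda>z. (z - z2)^(k+1) * F (k+2) z) z2 z1"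
  define S where "S = (\<Sum>i\<le>k. F i z1 * (z2 - z1)^i / fact i)"
  have z: "z1 \<in> \<Gamma>" "z2 \<in> \<Gamma>" "z1 \<noteq> z2" using t ne by (auto simp: z1_def z2_def)
  have E1: "(-1)^k * (z1 - z2)^(Suc k) * G z2 k z1 / fact k = S - f z2"
    unfolding S_def by (rule gclosed[OF z]) (use k in simp)
  have E3: "arc_integral \<phi> (\<lambda>z. F (Suc (Suc k)) z * (z2 - z)^(Suc k) / fact (Suc k)) z2 z1
      = (\<Sum>i\<le>Suc k. F i z1 * (z2 - z1)^i / fact i) - f z2"
    unfolding z1_def z2_def by (rule taylor_arc[OF t]) (use k in simp)
  have funeq: "(\<lambda>z. F (Suc (Suc k)) z * (z2 - z)^(Suc k) / fact (Suc k))
      = (\<lambda>z. ((-1)^(Suc k) / fact (Suc k)) * ((z - z2)^(k+1) * F (k+2) z))"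
  proof
    fix z
    have p: "(z2 - z)^(Suc k) = (-1)^(Suc k) * (z - z2)^(Suc k)"
      by (metis minus_diff_eq power_minus)
    show "F (Suc (Suc k)) z * (z2 - z)^(Suc k) / fact (Suc k)
      = ((-1)^(Suc k) / fact (Suc k)) * ((z - z2)^(k+1) * F (k+2) z)"
      unfolding p by (simp add: mult_ac)
  qed
  have q: "(-1::complex)^(Suc k) = - ((-1)^k)" by (simp only: power_Suc) simp
  have p2: "(z2 - z1)^(Suc k) = (- ((-1)^k)) * (z1 - z2)^(Suc k)"
    by (metis minus_diff_eq power_minus q)
  have f: "(fact (Suc k) :: complex) = of_nat (Suc k) * fact k" by (simp add: fact_Suc)
  have E3': "(- ((-1)^k)) / (of_nat (Suc k) * fact k) * I
      = S + F (Suc k) z1 * ((- ((-1)^k)) * (z1 - z2)^(Suc k)) / (of_nat (Suc k) * fact k) - f z2"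
  proof -
    have "((-1)^(Suc k) / fact (Suc k)) * I = (\<Sum>i\<le>Suc k. F i z1 * (z2 - z1)^i / fact i) - f z2"
      using E3 unfolding funeq arc_integral_cmult I_def .
    also have "\<dots> = S + F (Suc k) z1 * (z2 - z1)^(Suc k) / fact (Suc k) - f z2"
      by (simp add: S_def)
    finally show ?thesis unfolding q p2 f .
  qed
  have "G z2 k z1 = (F (Suc k) z1 - I / (z1 - z2)^(Suc k)) / of_nat (Suc k)"
  proof (rule aux_main[OF _ _ _ _ E1 E3'])
    show "(of_nat (Suc k)::complex) \<noteq> 0" by (rule of_nat_neq_0)
  qed (use z in simp_all)
  then show ?thesis by (simp add: z1_def z2_def I_def)
qed

lemma bound_int:
  assumes k: "k + 1 \<le> n"
  obtains K where "\<And>z1 z2. z1 \<in> \<Gamma> \<Longrightarrow> z2 \<in> \<Gamma> \<Longrightarrow> z1 \<noteq> z2 \<Longrightarrow>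
     norm (arc_integral \<phi> (\<lambda>z. (z - z2)^(k+1) * F (k+2) z) z2 z1 / (z1 - z2)^(k+1)) \<le> K"
proof -
  obtain L where L1: "L > 0" and L3: "\<forall>t\<in>{0..1}. norm (v t) \<le> L"
      and L2: "\<forall>s\<in>{0..1}. \<forall>t\<in>{0..1}. norm (\<phi> s - \<phi> t) \<le> L * \<bar>s - t\<bar>"
    by (rule adm_lip[OF adm])
  note L = L1 L2 L3
  obtain c where c: "c > 0" "\<forall>s\<in>{0..1}. \<forall>t\<in>{0..1}. c * \<bar>s - t\<bar> \<le> norm (\<phi> s - \<phi> t)"
    by (rule adm_chord[OF adm])
  obtain M where M: "M > 0" "\<And>z. z \<in> \<Gamma> \<Longrightarrow> norm (F (k+2) z) \<le> M"
    by (rule fbound[of "k+2"]) (use k in simp_all)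
  define K where "K = (L / c)^(k+1) * M * L"
  show ?thesis
  proof (rule that[of K])
    fix z1 z2 assume z: "z1 \<in> \<Gamma>" "z2 \<in> \<Gamma>" "z1 \<noteq> z2"
    then obtain t1 t2 where t: "t1 \<in> {0..1}" "t2 \<in> {0..1}" "z1 = \<phi> t1" "z2 = \<phi> t2" by auto
    define d where "d = \<bar>t1 - t2\<bar>"
    have "t1 \<noteq> t2" using z t by auto
    then have d: "d > 0" "d \<le> 1" using t by (auto simp: d_def)
    define h where "h t = (\<phi> t - z2)^(k+1) * F (k+2) (\<phi> t) * v t" for t
    have I: "arc_integral \<phi> (\<lambda>z. (z - z2)^(k+1) * F (k+2) z) z2 z1 = oriented_integral t2 t1 h"
      using arc_integral_eq[OF t(1,2), of "\<lambda>z. (z - z2)^(k+1) * F (k+2) z"] by (simp add: h_def[abs_def] t(3,4))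
    have sub: "{min t2 t1..max t2 t1} \<subseteq> {0..1}" using t by auto
    have hc: "continuous_on {0..1} h" unfolding h_def
      by (intro continuous_intros v_cont continuous_on_compose2[OF fcont adm_cont[OF adm]])
         (use k adm_cont[OF adm] in auto)
    have hb: "norm (h s) \<le> (L * d)^(k+1) * M * L" if s: "s \<in> {min t2 t1..max t2 t1}" for s
    proof -
      have s01: "s \<in> {0..1}" using s sub by blast
      have "\<bar>s - t2\<bar> \<le> d" using s by (auto simp: d_def)
      then have n1: "norm (\<phi> s - z2) \<le> L * d"
        using L(2) s01 t(2,4) L(1) by (meson order_trans mult_left_mono less_imp_le)
      have "norm (h s) = norm (\<phi> s - z2)^(k+1) * norm (F (k+2) (\<phi> s)) * norm (v s)"
        by (simp add: h_def norm_mult norm_power)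
      also have "\<dots> \<le> (L * d)^(k+1) * M * L"
        using n1 M(2)[of "\<phi> s"] L(3) s01 L(1) M(1) d(1)
        by (intro mult_mono power_mono) auto
      finally show ?thesis .
    qed
    have nI: "norm (oriented_integral t2 t1 h) \<le> (L * d)^(k+1) * M * L * d"
      using oriented_bound[OF continuous_on_subset[OF hc sub] hb] by (simp add: d_def abs_minus_commute)
    have nu: "(c * d)^(k+1) \<le> norm ((z1 - z2)^(k+1))"
      unfolding norm_power using c d t by (intro power_mono) (auto simp: d_def)
    have cd: "(c * d)^(k+1) > 0" using c d by simp
    have "norm (oriented_integral t2 t1 h / (z1 - z2)^(k+1))
        = norm (oriented_integral t2 t1 h) / norm ((z1 - z2)^(k+1))" by (simp add: norm_divide)
    also have "\<dots> \<le> norm (oriented_integral t2 t1 h) / (c * d)^(k+1)"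
    proof -
      have nu': "0 < norm ((z1 - z2)^(k+1))" using cd nu by linarith
      show ?thesis by (intro divide_left_mono nu norm_ge_zero mult_pos_pos nu' cd)
    qed
    also have "\<dots> \<le> (L * d)^(k+1) * M * L * d / (c * d)^(k+1)"
      by (intro divide_right_mono nI) (use cd in simp)
    also have "\<dots> = K * d"
      using c d by (simp add: K_def power_mult_distrib power_divide field_simps)
    also have "\<dots> \<le> K * 1"
      using d L c M by (intro mult_left_mono) (auto simp: K_def)
    finally show "norm (arc_integral \<phi> (\<lambda>z. (z - z2)^(k+1) * F (k+2) z) z2 z1 / (z1 - z2)^(k+1)) \<le> K"
      unfolding I by simp
  qed
qed

end



theorem lemma4:
  fixes \<phi> :: "real \<Rightarrow> complex" and f :: "complex \<Rightarrow> complex" and n :: nat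
  defines "\<gamma> \<equiv> \<phi> ` {0..1}"
  assumes n: "n \<ge> 2"
    and adm: "admissible_param \<phi>"
    and ex: "arc_deriv_exists_upto \<gamma> (n + 1) f"
    and cont: "continuous_on \<gamma> (arc_deriv \<gamma> (n + 1) f)"
  shows "\<forall>k\<in>{1..n-1}.
     bdd_above ((\<lambda>z. norm (arc_deriv \<gamma> (k + 1) f z)) ` \<gamma>) \<and>
     bdd_above ((\<lambda>(z1, z2). norm (arc_integral \<phi> (\<lambda>z. (z - z2) ^ (k + 1) * arc_deriv \<gamma> (k + 2) f z) z2 z1
                                   / (z1 - z2) ^ (k + 1)))
                ` {(z1, z2). z1 \<in> \<gamma> \<and> z2 \<in> \<gamma> \<and> z1 \<noteq> z2}) \<and>
     (\<forall>z1\<in>\<gamma>. \<forall>z2\<in>\<gamma>. z1 \<noteq> z2 \<longrightarrow>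
        norm (d1k \<gamma> k f z1 z2) \<le>
          ((SUP z\<in>\<gamma>. norm (arc_deriv \<gamma> (k + 1) f z)) +
           (SUP p\<in>{(z1, z2). z1 \<in> \<gamma> \<and> z2 \<in> \<gamma> \<and> z1 \<noteq> z2}.
              (case p of (z1, z2) \<Rightarrow>
                 norm (arc_integral \<phi> (\<lambda>z. (z - z2) ^ (k + 1) * arc_deriv \<gamma> (k + 2) f z) z2 z1
                       / (z1 - z2) ^ (k + 1))))) / real (k + 1))"
proof -
  interpret arcset \<phi> f n
    by unfold_locales (use adm ex cont in \<open>simp_all add: \<gamma>_def\<close>)
  have g: "\<gamma> = \<Gamma>" by (simp add: \<gamma>_def)
  show ?thesis unfolding g
  proof (rule ballI, intro conjI)
    fix k assume k: "k \<in> {1..n-1}"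
    then have k1: "k + 1 \<le> n" using n by auto
    obtain M where M: "M > 0" "\<And>z. z \<in> \<Gamma> \<Longrightarrow> norm (F (k+1) z) \<le> M"
      by (rule fbound[of "k+1"]) (use k1 in simp_all)
    show b1: "bdd_above ((\<lambda>z. norm (F (k + 1) z)) ` \<Gamma>)"
      by (rule bdd_aboveI2[where M = M]) (use M in auto)
    obtain K where K: "\<And>z1 z2. z1 \<in> \<Gamma> \<Longrightarrow> z2 \<in> \<Gamma> \<Longrightarrow> z1 \<noteq> z2 \<Longrightarrow>
     norm (arc_integral \<phi> (\<lambda>z. (z - z2)^(k+1) * F (k+2) z) z2 z1 / (z1 - z2)^(k+1)) \<le> K"
      using bound_int[OF k1] by blast
    show b2: "bdd_above ((\<lambda>(z1, z2). norm (arc_integral \<phi> (\<lambda>z. (z - z2) ^ (k + 1) * F (k + 2) z) z2 z1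
                                   / (z1 - z2) ^ (k + 1)))
                ` {(z1, z2). z1 \<in> \<Gamma> \<and> z2 \<in> \<Gamma> \<and> z1 \<noteq> z2})"
    proof (rule bdd_aboveI2[where M = K])
      fix p assume "p \<in> {(z1, z2). z1 \<in> \<Gamma> \<and> z2 \<in> \<Gamma> \<and> z1 \<noteq> z2}"
      then obtain z1 z2 where p: "p = (z1, z2)" "z1 \<in> \<Gamma>" "z2 \<in> \<Gamma>" "z1 \<noteq> z2" by auto
      show "(\<lambda>(z1, z2). norm (arc_integral \<phi> (\<lambda>z. (z - z2) ^ (k + 1) * F (k + 2) z) z2 z1
                                   / (z1 - z2) ^ (k + 1))) p \<le> K"
        using K[OF p(2-4)] by (simp add: p(1))
    qed
    show "\<forall>z1\<in>\<Gamma>. \<forall>z2\<in>\<Gamma>. z1 \<noteq> z2 \<longrightarrow>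
        norm (d1k \<Gamma> k f z1 z2) \<le>
          ((SUP z\<in>\<Gamma>. norm (F (k + 1) z)) +
           (SUP p\<in>{(z1, z2). z1 \<in> \<Gamma> \<and> z2 \<in> \<Gamma> \<and> z1 \<noteq> z2}.
              (case p of (z1, z2) \<Rightarrow>
                 norm (arc_integral \<phi> (\<lambda>z. (z - z2) ^ (k + 1) * F (k + 2) z) z2 z1
                       / (z1 - z2) ^ (k + 1))))) / real (k + 1)"
    proof (intro ballI impI)
      fix z1 z2 assume z: "z1 \<in> \<Gamma>" "z2 \<in> \<Gamma>" "z1 \<noteq> z2"
      then obtain t1 t2 where t: "t1 \<in> {0..1}" "t2 \<in> {0..1}" "z1 = \<phi> t1" "z2 = \<phi> t2" by auto
      define I where "I = arc_integral \<phi> (\<lambda>z. (z - z2) ^ (k + 1) * F (k + 2) z) z2 z1"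
      have eq: "d1k \<Gamma> k f z1 z2 = (F (k+1) z1 - I / (z1 - z2)^(k+1)) / of_nat (k+1)"
        using main_eq[OF t(1,2) _ k1] z t by (simp add: d1k_def G_def I_def)
      have "norm (d1k \<Gamma> k f z1 z2) = norm (F (k+1) z1 - I / (z1 - z2)^(k+1)) / real (k+1)"
        unfolding eq by (simp only: norm_divide norm_of_nat)
      also have "\<dots> \<le> (norm (F (k+1) z1) + norm (I / (z1 - z2)^(k+1))) / real (k+1)"
        by (intro divide_right_mono norm_triangle_ineq4) simp
      also have "\<dots> \<le> ((SUP z\<in>\<Gamma>. norm (F (k + 1) z)) +
           (SUP p\<in>{(z1, z2). z1 \<in> \<Gamma> \<and> z2 \<in> \<Gamma> \<and> z1 \<noteq> z2}.
              (case p of (z1, z2) \<Rightarrow>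
                 norm (arc_integral \<phi> (\<lambda>z. (z - z2) ^ (k + 1) * F (k + 2) z) z2 z1
                       / (z1 - z2) ^ (k + 1))))) / real (k + 1)"
      proof (intro divide_right_mono add_mono)
        show "norm (F (k+1) z1) \<le> (SUP z\<in>\<Gamma>. norm (F (k + 1) z))"
          by (rule cSUP_upper[OF z(1) b1])
        have "(z1, z2) \<in> {(z1, z2). z1 \<in> \<Gamma> \<and> z2 \<in> \<Gamma> \<and> z1 \<noteq> z2}" using z by simp
        from cSUP_upper[OF this b2]
        show "norm (I / (z1 - z2)^(k+1)) \<le> (SUP p\<in>{(z1, z2). z1 \<in> \<Gamma> \<and> z2 \<in> \<Gamma> \<and> z1 \<noteq> z2}.
              (case p of (z1, z2) \<Rightarrow>
                 norm (arc_integral \<phi> (\<lambda>z. (z - z2) ^ (k + 1) * F (k + 2) z) z2 z1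
                       / (z1 - z2) ^ (k + 1))))"
          by (simp add: I_def)
      qed simp
      finally show "norm (d1k \<Gamma> k f z1 z2) \<le> ((SUP z\<in>\<Gamma>. norm (F (k + 1) z)) +
           (SUP p\<in>{(z1, z2). z1 \<in> \<Gamma> \<and> z2 \<in> \<Gamma> \<and> z1 \<noteq> z2}.
              (case p of (z1, z2) \<Rightarrow>
                 norm (arc_integral \<phi> (\<lambda>z. (z - z2) ^ (k + 1) * F (k + 2) z) z2 z1
                       / (z1 - z2) ^ (k + 1))))) / real (k + 1)" .
    qed
  qed
qed


end
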